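(* Any instance of \textsc{Virtual Edge Steiner Tree} with $k$ terminals and $\ell$ virtual edges can be reduced to $4^{\ell}$ instances of \textsc{Steiner Tree}, each with at most $k+2\ell$ terminals; that is, the minimum total cost of the \textsc{Virtual Edge Steiner Tree} instance is obtained as the minimum, over these $4^\ell$ instances, of the optimum of the \textsc{Steiner Tree} instance plus the corresponding virtual edge weights.
   Context: \textsc{Steiner Tree}: given a graph with nonnegative edge weights and a terminal set $T$, find a minimum-weight edge set connecting all terminals. \textsc{Virtual Edge Steiner Tree}: the input is a graph $G=(V,E)$ (parallel edges allowed, no loops) with weights $w_e\in\mathbb{R}_{\ge0}$ for $e\in E$, a set of terminals $T\subseteq V$, and a set $E^*$ of ``virtual edges'' (pairs $\{u,v\}$ of vertices, with $E\cap E^*=\emptyset$), each virtual edge $e^*=\{u,v\}$ having a weight function $w_{e^*}:\{u,v,\mathsf{d},\mathsf{c}\}\to\mathbb{R}_{\ge0}$. A solution is a set $S\subseteq E\cup E^*$ forming a tree (Steiner tree) with $T\subseteq V(S)$ and $V(S)\cap e^*\neq\emptyset$ for each $e^*\in E^*$, where $V(S)$ is the set of vertices covered by $S$. The cost $c_{e^*}(S)$ of $e^*=\{u,v\}$ is $w_{e^*}(u)$ if $u\in V(S),v\notin V(S)$; $w_{e^*}(v)$ if $v\in V(S),u\notin V(S)$; $w_{e^*}(\mathsf{c})$ if $e^*\in S$; and $w_{e^*}(\mathsf{d})$ if $u,v\in V(S)$ and $e^*\notin S$. The total cost is $c(S)=\sum_{e\in S\cap E}w_e+\sum_{e^*\in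 E^*}c_{e^*}(S)$, to be minimized. *)

theory Defs
  imports Main "HOL-Library.FuncSet" "HOL-Library.Extended_Real"
begin

text \<open>A multigraph is given by a vertex set V, an edge set E (edges are abstract
  objects, so parallel edges are allowed) and an endpoint map ends; no loops.\<close>

definition multigraph :: "'v set \<Rightarrow> 'e set \<Rightarrow> ('e \<Rightarrow> 'v set) \<Rightarrow> bool" where
  "multigraph V E ends \<longleftrightarrow> finite V \<and> finite E \<and>
     (\<forall>e\<in>E. ends e \<subseteq> V \<and> card (ends e) = 2)"

definition adj :: "('e \<Rightarrow> 'v set) \<Rightarrow> 'e set \<Rightarrow> ('v \<times> 'v) set" where
  "adj ends S = {(x, y). \<exists>e\<in>S. ends e = {x, y}}"

definition has_cycle :: "('e \<Rightarrow> 'v set) \<Rightarrow> 'e set \<Rightarrow> bool" where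
  "has_cycle ends S \<longleftrightarrow> (\<exists>es vs. length es = length vs \<and> length vs \<ge> 2 \<and>
     distinct es \<and> distinct vs \<and> set es \<subseteq> S \<and>
     (\<forall>i<length vs. ends (es ! i) = {vs ! i, vs ! (Suc i mod length vs)}))"

definition is_tree :: "('e \<Rightarrow> 'v set) \<Rightarrow> 'v set \<Rightarrow> 'e set \<Rightarrow> bool" where
  "is_tree ends U S \<longleftrightarrow> finite U \<and> U \<noteq> {} \<and> finite S \<and> (\<forall>e\<in>S. ends e \<subseteq> U) \<and>
     (\<forall>x\<in>U. \<forall>y\<in>U. (x, y) \<in> (adj ends S)\<^sup>*) \<and> \<not> has_cycle ends S"

definition steiner_tree ::
  "'v set \<Rightarrow> 'e set \<Rightarrow> ('e \<Rightarrow> 'v set) \<Rightarrow> 'v set \<Rightarrow> 'v set \<Rightarrow> 'e set \<Rightarrow> bool" where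
  "steiner_tree V E ends T U S \<longleftrightarrow> is_tree ends U S \<and> U \<subseteq> V \<and> S \<subseteq> E \<and> T \<subseteq> U"

text \<open>Optimum of a Steiner Tree instance (infinity if infeasible).\<close>
definition st_opt ::
  "'v set \<Rightarrow> 'e set \<Rightarrow> ('e \<Rightarrow> 'v set) \<Rightarrow> ('e \<Rightarrow> real) \<Rightarrow> 'v set \<Rightarrow> ereal" where
  "st_opt V E ends w T =
     (INF US \<in> {(U, S). steiner_tree V E ends T U S}. ereal (\<Sum>e\<in>snd US. w e))"

text \<open>The four states of a virtual edge {u,v}: Side u, Side v, Dis (= d), Con (= c).\<close>
datatype 'v vstate = Side 'v | Dis | Con

definition vstate_of :: "('e \<Rightarrow> 'v set) \<Rightarrow> 'v set \<Rightarrow> 'e set \<Rightarrow> 'e \<Rightarrow> 'v vstate" where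
  "vstate_of ends U S e =
     (if e \<in> S then Con else if ends e \<subseteq> U then Dis else Side (THE x. x \<in> ends e \<inter> U))"

definition vest_solution ::
  "'v set \<Rightarrow> 'e set \<Rightarrow> 'e set \<Rightarrow> ('e \<Rightarrow> 'v set) \<Rightarrow> 'v set \<Rightarrow> 'v set \<Rightarrow> 'e set \<Rightarrow> bool" where
  "vest_solution V E Es ends T U S \<longleftrightarrow> is_tree ends U S \<and> U \<subseteq> V \<and> S \<subseteq> E \<union> Es \<and>
     T \<subseteq> U \<and> (\<forall>e\<in>Es. ends e \<inter> U \<noteq> {})"

definition vest_cost ::
  "'e set \<Rightarrow> 'e set \<Rightarrow> ('e \<Rightarrow> 'v set) \<Rightarrow> ('e \<Rightarrow> real) \<Rightarrow> ('e \<Rightarrow> 'v vstate \<Rightarrow> real)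
     \<Rightarrow> 'v set \<Rightarrow> 'e set \<Rightarrow> real" where
  "vest_cost E Es ends w wv U S =
     (\<Sum>e\<in>S \<inter> E. w e) + (\<Sum>e\<in>Es. wv e (vstate_of ends U S e))"

definition vest_opt ::
  "'v set \<Rightarrow> 'e set \<Rightarrow> 'e set \<Rightarrow> ('e \<Rightarrow> 'v set) \<Rightarrow> ('e \<Rightarrow> real) \<Rightarrow> ('e \<Rightarrow> 'v vstate \<Rightarrow> real)
     \<Rightarrow> 'v set \<Rightarrow> ereal" where
  "vest_opt V E Es ends w wv T =
     (INF US \<in> {(U, S). vest_solution V E Es ends T U S}.
        ereal (vest_cost E Es ends w wv (fst US) (snd US)))"

definition assignments :: "('e \<Rightarrow> 'v set) \<Rightarrow> 'e set \<Rightarrow> ('e \<Rightarrow> 'v vstate) set" where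
  "assignments ends Es = (\<Pi>\<^sub>E e\<in>Es. Side ` ends e \<union> {Dis, Con})"

definition con_edges :: "'e set \<Rightarrow> ('e \<Rightarrow> 'v vstate) \<Rightarrow> 'e set" where
  "con_edges Es \<sigma> = {e\<in>Es. \<sigma> e = Con}"

text \<open>Contraction class of a vertex: component w.r.t. the virtual edges in state Con.\<close>
definition cls :: "('e \<Rightarrow> 'v set) \<Rightarrow> 'e set \<Rightarrow> ('e \<Rightarrow> 'v vstate) \<Rightarrow> 'v \<Rightarrow> 'v set" where
  "cls ends Es \<sigma> x = (adj ends (con_edges Es \<sigma>))\<^sup>* `` {x}"

text \<open>Vertices that must be absent (the other endpoint of a virtual edge in state Side x).\<close>
definition deleted :: "('e \<Rightarrow> 'v set) \<Rightarrow> 'e set \<Rightarrow> ('e \<Rightarrow> 'v vstate) \<Rightarrow> 'v set" where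
  "deleted ends Es \<sigma> = {y. \<exists>e\<in>Es. \<exists>x. \<sigma> e = Side x \<and> y \<in> ends e \<and> y \<noteq> x}"

definition virt_terms :: "('e \<Rightarrow> 'v set) \<Rightarrow> 'e set \<Rightarrow> ('e \<Rightarrow> 'v vstate) \<Rightarrow> 'v set" where
  "virt_terms ends Es \<sigma> = (\<Union>e\<in>Es. case \<sigma> e of Side x \<Rightarrow> {x} | _ \<Rightarrow> ends e)"

definition red_V :: "'v set \<Rightarrow> ('e \<Rightarrow> 'v set) \<Rightarrow> 'e set \<Rightarrow> ('e \<Rightarrow> 'v vstate) \<Rightarrow> 'v set set" where
  "red_V V ends Es \<sigma> =
     (if has_cycle ends (con_edges Es \<sigma>) then {}
      else {cls ends Es \<sigma> x | x. x \<in> V \<and> cls ends Es \<sigma> x \<inter> deleted ends Es \<sigma> = {}})"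

definition red_ends :: "('e \<Rightarrow> 'v set) \<Rightarrow> 'e set \<Rightarrow> ('e \<Rightarrow> 'v vstate) \<Rightarrow> 'e \<Rightarrow> 'v set set" where
  "red_ends ends Es \<sigma> e = cls ends Es \<sigma> ` ends e"

definition red_E ::
  "'v set \<Rightarrow> 'e set \<Rightarrow> ('e \<Rightarrow> 'v set) \<Rightarrow> 'e set \<Rightarrow> ('e \<Rightarrow> 'v vstate) \<Rightarrow> 'e set" where
  "red_E V E ends Es \<sigma> =
     {e\<in>E. card (red_ends ends Es \<sigma> e) = 2 \<and> red_ends ends Es \<sigma> e \<subseteq> red_V V ends Es \<sigma>}"

definition red_T :: "'v set \<Rightarrow> ('e \<Rightarrow> 'v set) \<Rightarrow> 'e set \<Rightarrow> ('e \<Rightarrow> 'v vstate) \<Rightarrow> 'v set set" where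
  "red_T T ends Es \<sigma> = cls ends Es \<sigma> ` (T \<union> virt_terms ends Es \<sigma>)"

end

theory Submission
  imports Defs
begin

lemma adj_sym: "(x, y) \<in> adj ends S \<Longrightarrow> (y, x) \<in> adj ends S"
  unfolding adj_def by (auto simp: insert_commute)

lemma adj_rtr_sym: "(x, y) \<in> (adj ends S)\<^sup>* \<Longrightarrow> (y, x) \<in> (adj ends S)\<^sup>*"
proof (induction rule: rtrancl_induct)
  case base then show ?case by simp
next
  case (step y z) then show ?case
    by (meson adj_sym converse_rtrancl_into_rtrancl)
qed

lemma adj_mono: "A \<subseteq> B \<Longrightarrow> adj ends A \<subseteq> adj ends B"
  unfolding adj_def by auto

lemma adj_rtr_mono: "A \<subseteq> B \<Longrightarrow> (x, y) \<in> (adj ends A)\<^sup>* \<Longrightarrow> (x, y) \<in> (adj ends B)\<^sup>*"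
  using rtrancl_mono[OF adj_mono] by blast

lemma has_cycle_mono: "has_cycle ends A \<Longrightarrow> A \<subseteq> B \<Longrightarrow> has_cycle ends B"
  unfolding has_cycle_def by blast

lemma no_cycle_empty: "\<not> has_cycle ends {}"
  unfolding has_cycle_def by auto

lemma rtr_map:
  assumes "\<And>a b. (a, b) \<in> R \<Longrightarrow> (f a, f b) \<in> R'\<^sup>*"
    and "(x, y) \<in> R\<^sup>*"
  shows "(f x, f y) \<in> R'\<^sup>*"
  using assms(2)
proof (induction rule: rtrancl_induct)
  case base then show ?case by simp
next
  case (step y z) then show ?case using assms(1) by (meson rtrancl_trans)
qed

lemma cycle_remove_edge:
  assumes len: "length es = length vs" "length vs \<ge> 2" and dist: "distinct es"
    and set: "set es \<subseteq> S"
    and ends: "\<forall>i<length vs. ends (es ! i) = {vs ! i, vs ! (Suc i mod length vs)}"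
    and i: "i < length vs"
  shows "(vs ! i, vs ! (Suc i mod length vs)) \<in> (adj ends (S - {es ! i}))\<^sup>*"
proof -
  define n where "n = length vs"
  define R where "R = adj ends (S - {es ! i})"
  have edge: "(vs ! j, vs ! (Suc j mod n)) \<in> R" if "j < n" "j \<noteq> i" for j
  proof -
    have "es ! j \<noteq> es ! i" using dist that i len unfolding n_def
      by (simp add: nth_eq_iff_index_eq)
    moreover have "es ! j \<in> S" using set that len unfolding n_def by auto
    ultimately show ?thesis using ends that unfolding R_def adj_def n_def by auto
  qed
  have A: "(vs ! 0, vs ! j) \<in> R\<^sup>*" if "j \<le> i" for j
    using that
  proof (induction j)
    case 0 then show ?case by simp
  next
    case (Suc j)
    have "Suc j mod n = Suc j" using Suc.prems i unfolding n_def by simp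
    then have "(vs ! j, vs ! Suc j) \<in> R" using edge[of j] Suc.prems i unfolding n_def by auto
    then show ?case using Suc by (meson Suc_leD rtrancl.rtrancl_into_rtrancl)
  qed
  have B: "(vs ! (n - 1 - d), vs ! 0) \<in> R\<^sup>*" if "i < n - 1 - d" for d
    using that
  proof (induction d)
    case 0
    have "Suc (n - 1) = n" using i unfolding n_def by simp
    then have "Suc (n - 1) mod n = 0" by simp
    then have "(vs ! (n - 1), vs ! 0) \<in> R" using edge[of "n - 1"] 0 i unfolding n_def by auto
    then show ?case by simp
  next
    case (Suc d)
    have "Suc (n - 1 - Suc d) = n - 1 - d" using Suc.prems by simp
    moreover have "Suc (n - 1 - d) \<le> n" using Suc.prems by simp
    ultimately have "Suc (n - 1 - Suc d) mod n = n - 1 - d" using Suc.prems by simp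
    then have "(vs ! (n - 1 - Suc d), vs ! (n - 1 - d)) \<in> R"
      using edge[of "n - 1 - Suc d"] Suc.prems i unfolding n_def by auto
    then show ?case using Suc by (meson converse_rtrancl_into_rtrancl less_imp_diff_less
          diff_less_mono2 order.strict_trans2 diff_le_mono2 le_less_trans not_less_eq Suc_lessD
          order_less_imp_le diff_Suc_less)
  qed
  have p1: "(vs ! i, vs ! 0) \<in> R\<^sup>*" using A[of i] unfolding R_def by (simp add: adj_rtr_sym)
  have p2: "(vs ! 0, vs ! (Suc i mod n)) \<in> R\<^sup>*"
  proof (cases "Suc i < n")
    case True
    then have "Suc i = n - 1 - (n - 1 - Suc i)" by simp
    then have "(vs ! (Suc i), vs ! 0) \<in> R\<^sup>*" using B[of "n - 1 - Suc i"] True by (metis lessI)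
    then show ?thesis using True unfolding R_def by (simp add: adj_rtr_sym)
  next
    case False
    then have "Suc i = n" using i unfolding n_def by simp
    then have "Suc i mod n = 0" by simp
    then show ?thesis by simp
  qed
  show ?thesis using p1 p2 unfolding R_def n_def by (meson rtrancl_trans)
qed

lemma spanning_aux:
  assumes "finite S" "K0 \<subseteq> S" "\<not> has_cycle ends K0"
    and "\<forall>x\<in>U. \<forall>y\<in>U. (x, y) \<in> (adj ends S)\<^sup>*"
  shows "\<exists>S0. K0 \<subseteq> S0 \<and> S0 \<subseteq> S \<and> (\<forall>x\<in>U. \<forall>y\<in>U. (x, y) \<in> (adj ends S0)\<^sup>*)
           \<and> \<not> has_cycle ends S0"
  using assms
proof (induction "card S" arbitrary: S rule: less_induct)
  case less
  show ?case
  proof (cases "has_cycle ends S")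
    case False
    then show ?thesis using less.prems by blast
  next
    case True
    then obtain es vs where c: "length es = length vs" "length vs \<ge> 2"
     "distinct es" "distinct vs" "set es \<subseteq> S"
     "\<forall>i<length vs. ends (es ! i) = {vs ! i, vs ! (Suc i mod length vs)}"
      unfolding has_cycle_def by blast
    have "\<not> set es \<subseteq> K0"
      using c less.prems(3) unfolding has_cycle_def by blast
    then obtain i where i: "i < length vs" "es ! i \<notin> K0"
      using c(1) by (metis in_set_conv_nth subsetI)
    define S1 where "S1 = S - {es ! i}"
    have inS: "es ! i \<in> S" using c i by auto
    have card: "card S1 < card S" unfolding S1_def using inS less.prems(1)
      by (metis card_Diff1_less)
    have cyc: "(vs ! i, vs ! (Suc i mod length vs)) \<in> (adj ends S1)\<^sup>*"
      unfolding S1_def using cycle_remove_edge[OF c(1,2,3,5,6) i(1)] .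
    have step: "(a, b) \<in> (adj ends S1)\<^sup>*" if ab: "(a, b) \<in> adj ends S" for a b
    proof -
      obtain e' where e': "e' \<in> S" "ends e' = {a, b}" using ab unfolding adj_def by auto
      show ?thesis
      proof (cases "e' = es ! i")
        case False
        then have "(a, b) \<in> adj ends S1" using e' unfolding adj_def S1_def by auto
        then show ?thesis by simp
      next
        case True
        then have "{a, b} = {vs ! i, vs ! (Suc i mod length vs)}" using e' c(6) i by auto
        then have "(a = vs ! i \<and> b = vs ! (Suc i mod length vs)) \<or> (a = vs ! (Suc i mod length vs) \<and> b = vs ! i)"
          by (simp only: doubleton_eq_iff)
        then show ?thesis
        proof
          assume "a = vs ! i \<and> b = vs ! (Suc i mod length vs)"
          then show ?thesis using cyc by simp
        next
          assume "a = vs ! (Suc i mod length vs) \<and> b = vs ! i"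
          then show ?thesis using adj_rtr_sym[OF cyc] by simp
        qed
      qed
    qed
    have conn: "\<forall>x\<in>U. \<forall>y\<in>U. (x, y) \<in> (adj ends S1)\<^sup>*"
      using less.prems(4) rtr_map[where f=id, OF step] by simp
    have "K0 \<subseteq> S1" using less.prems(2) i unfolding S1_def by auto
    moreover have "finite S1" using less.prems(1) unfolding S1_def by simp
    ultimately obtain S0 where "K0 \<subseteq> S0 \<and> S0 \<subseteq> S1 \<and> (\<forall>x\<in>U. \<forall>y\<in>U. (x, y) \<in> (adj ends S0)\<^sup>*)
           \<and> \<not> has_cycle ends S0"
      using less.hyps[OF card _ _ less.prems(3) conn] by blast
    then show ?thesis unfolding S1_def by blast
  qed
qed

lemma cls_mem: "y \<in> cls ends Es \<sigma> x \<longleftrightarrow> (x, y) \<in> (adj ends (con_edges Es \<sigma>))\<^sup>*"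
  unfolding cls_def by simp

lemma cls_refl: "x \<in> cls ends Es \<sigma> x"
  unfolding cls_mem by simp

lemma cls_eq: "y \<in> cls ends Es \<sigma> x \<Longrightarrow> cls ends Es \<sigma> y = cls ends Es \<sigma> x"
  unfolding cls_def by (auto dest: adj_rtr_sym intro: rtrancl_trans)

lemma cls_sub: "y \<in> cls ends Es \<sigma> x \<Longrightarrow> y = x \<or> (\<exists>e\<in>con_edges Es \<sigma>. y \<in> ends e)"
  unfolding cls_mem
proof (induction rule: rtrancl_induct)
  case base then show ?case by simp
next
  case (step y z) then show ?case unfolding adj_def by auto
qed

lemma ereal_INF_add_bound:
  assumes "\<And>x. x \<in> A \<Longrightarrow> a \<le> ereal (f x + c)" "\<And>x. x \<in> A \<Longrightarrow> 0 \<le> f x"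
  shows "a \<le> (INF x\<in>A. ereal (f x)) + ereal c"
proof (cases "A = {}")
  case True then show ?thesis by (simp add: top_ereal_def)
next
  case False
  have "(INF x\<in>A. ereal (f x)) + ereal c = (INF x\<in>A. ereal (f x) + ereal c)"
    by (rule INF_ereal_add_left[symmetric]) (use False assms(2) in auto)
  also have "a \<le> \<dots>" using assms(1) by (auto intro!: INF_greatest)
  finally show ?thesis .
qed

lemma card2_obtain:
  assumes "card X = 2" obtains x y where "X = {x, y}" "x \<noteq> y"
  using assms by (meson card_2_iff)

lemma fwd:
  assumes mg: "multigraph V (E \<union> Es) ends"
    and disj: "E \<inter> Es = {}"
    and wpos: "\<forall>e\<in>E. w e \<ge> 0"
    and sol: "vest_solution V E Es ends T U S"
  shows "\<exists>\<sigma>\<in>assignments ends Es.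
     st_opt (red_V V ends Es \<sigma>) (red_E V E ends Es \<sigma>) (red_ends ends Es \<sigma>) w (red_T T ends Es \<sigma>)
       + ereal (\<Sum>e\<in>Es. wv e (\<sigma> e)) \<le> ereal (vest_cost E Es ends w wv U S)"
proof -
  from sol have tree: "is_tree ends U S" and UV: "U \<subseteq> V" and SE: "S \<subseteq> E \<union> Es"
    and TU: "T \<subseteq> U" and meet: "\<forall>e\<in>Es. ends e \<inter> U \<noteq> {}"
    unfolding vest_solution_def by auto
  from tree have finU: "finite U" and Une: "U \<noteq> {}" and finS: "finite S"
    and endsS: "\<forall>e\<in>S. ends e \<subseteq> U" and conn: "\<forall>x\<in>U. \<forall>y\<in>U. (x, y) \<in> (adj ends S)\<^sup>*"
    and acyc: "\<not> has_cycle ends S"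
    unfolding is_tree_def by auto
  from mg have finV: "finite V" and card2: "\<And>e. e \<in> E \<union> Es \<Longrightarrow> card (ends e) = 2"
    and endsV: "\<And>e. e \<in> E \<union> Es \<Longrightarrow> ends e \<subseteq> V"
    unfolding multigraph_def by auto
  define \<sigma> where "\<sigma> = restrict (vstate_of ends U S) Es"
  have \<sigma>_eq: "\<sigma> e = vstate_of ends U S e" if "e \<in> Es" for e
    using that unfolding \<sigma>_def by simp
  have side: "\<exists>x y. ends e = {x, y} \<and> x \<noteq> y \<and> x \<in> U \<and> y \<notin> U \<and> \<sigma> e = Side x"
    if e: "e \<in> Es" "e \<notin> S" "\<not> ends e \<subseteq> U" for e
  proof -
    have "card (ends e) = 2" using card2 e(1) by auto
    then obtain x y where xy: "ends e = {x, y}" "x \<noteq> y" by (rule card2_obtain)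
    have m: "ends e \<inter> U \<noteq> {}" using meet e by auto
    show ?thesis
    proof (cases "x \<in> U")
      case True
      then have "y \<notin> U" using e(3) xy by auto
      then have "ends e \<inter> U = {x}" using True xy by auto
      then have "\<sigma> e = Side x" using e \<sigma>_eq unfolding vstate_of_def by simp
      then show ?thesis using xy True \<open>y \<notin> U\<close> by blast
    next
      case False
      then have "y \<in> U" using m xy by auto
      then have "ends e \<inter> U = {y}" using False xy by auto
      then have "\<sigma> e = Side y" using e \<sigma>_eq unfolding vstate_of_def by simp
      then show ?thesis using xy False \<open>y \<in> U\<close> by (metis insert_commute)
    qed
  qed
  have vcases: "(\<sigma> e = Con \<and> e \<in> S) \<or> (\<sigma> e = Dis \<and> e \<notin> S \<and> ends e \<subseteq> U) \<or>
     (e \<notin> S \<and> \<not> ends e \<subseteq> U \<and> (\<exists>x y. ends e = {x, y} \<and> x \<noteq> y \<and> x \<in> U \<and> y \<notin> U \<and> \<sigma> e = Side x))"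
    if e: "e \<in> Es" for e
    using side[OF e] \<sigma>_eq[OF e] unfolding vstate_of_def by auto
  have \<sigma>_in: "\<sigma> \<in> assignments ends Es"
    unfolding assignments_def
  proof
    show "\<sigma> e \<in> Side ` ends e \<union> {Dis, Con}" if "e \<in> Es" for e
      using vcases[OF that] by auto
  qed (simp add: \<sigma>_def)
  define C where "C = con_edges Es \<sigma>"
  have C_eq: "C = S \<inter> Es" unfolding C_def con_edges_def using vcases by fastforce
  define cl where "cl = cls ends Es \<sigma>"
  have nocyc: "\<not> has_cycle ends C" using acyc has_cycle_mono C_eq by blast
  have clsU: "cl x \<subseteq> U" if "x \<in> U" for x
  proof
    fix y assume "y \<in> cl x"
    then have "(x, y) \<in> (adj ends C)\<^sup>*" unfolding cl_def C_def cls_mem .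
    then show "y \<in> U"
    proof (induction rule: rtrancl_induct)
      case base then show ?case using that .
    next
      case (step y z) then show ?case using endsS C_eq unfolding adj_def by auto
    qed
  qed
  have del: "deleted ends Es \<sigma> \<inter> U = {}"
  proof (rule ccontr)
    assume "deleted ends Es \<sigma> \<inter> U \<noteq> {}"
    then obtain y e x where y: "e \<in> Es" "\<sigma> e = Side x" "y \<in> ends e" "y \<noteq> x" "y \<in> U"
      unfolding deleted_def by blast
    then show False using vcases[OF y(1)] by auto
  qed
  define U' where "U' = cl ` U"
  have U'V: "U' \<subseteq> red_V V ends Es \<sigma>"
  proof
    fix A assume "A \<in> U'"
    then obtain x where x: "x \<in> U" "A = cl x" unfolding U'_def by blast
    have "cl x \<inter> deleted ends Es \<sigma> = {}" using clsU[OF x(1)] del by blast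
    moreover have "x \<in> V" using x UV by blast
    ultimately show "A \<in> red_V V ends Es \<sigma>"
      unfolding red_V_def using nocyc x(2) unfolding C_def cl_def by auto
  qed
  define S' where "S' = {e \<in> S \<inter> E. card (red_ends ends Es \<sigma> e) = 2}"
  have S'E: "S' \<subseteq> red_E V E ends Es \<sigma>"
  proof
    fix e assume e: "e \<in> S'"
    have "red_ends ends Es \<sigma> e \<subseteq> U'" using e endsS unfolding S'_def red_ends_def U'_def cl_def by blast
    then show "e \<in> red_E V E ends Es \<sigma>" using e U'V unfolding red_E_def S'_def by auto
  qed
  have ends'S': "\<forall>e\<in>S'. red_ends ends Es \<sigma> e \<subseteq> U'"
    using endsS unfolding S'_def red_ends_def U'_def cl_def by blast
  have stepm: "(cl a, cl b) \<in> (adj (red_ends ends Es \<sigma>) S')\<^sup>*" if ab: "(a, b) \<in> adj ends S" for a b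
  proof -
    obtain e where e: "e \<in> S" "ends e = {a, b}" using ab unfolding adj_def by auto
    show ?thesis
    proof (cases "cl a = cl b")
      case True then show ?thesis by simp
    next
      case False
      show ?thesis
      proof (cases "e \<in> Es")
        case True
        then have "e \<in> C" using C_eq e by auto
        then have "(a, b) \<in> adj ends C" using e unfolding adj_def by auto
        then have "b \<in> cl a" unfolding cl_def cls_mem C_def by auto
        then have "cl b = cl a" unfolding cl_def by (rule cls_eq)
        then show ?thesis using False by simp
      next
        case eE: False
        then have "e \<in> E" using e SE by auto
        have "red_ends ends Es \<sigma> e = {cl a, cl b}" using e unfolding red_ends_def cl_def by auto
        then have "card (red_ends ends Es \<sigma> e) = 2" using False by simp
        then have "e \<in> S'" unfolding S'_def using e \<open>e \<in> E\<close> by auto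
        then have "(cl a, cl b) \<in> adj (red_ends ends Es \<sigma>) S'"
          using \<open>red_ends ends Es \<sigma> e = {cl a, cl b}\<close> unfolding adj_def by auto
        then show ?thesis by simp
      qed
    qed
  qed
  have conn': "\<forall>A\<in>U'. \<forall>B\<in>U'. (A, B) \<in> (adj (red_ends ends Es \<sigma>) S')\<^sup>*"
    unfolding U'_def using conn rtr_map[where f=cl, OF stepm] by blast
  have virtU: "virt_terms ends Es \<sigma> \<subseteq> U"
  proof
    fix z assume "z \<in> virt_terms ends Es \<sigma>"
    then obtain e where e: "e \<in> Es" "z \<in> (case \<sigma> e of Side x \<Rightarrow> {x} | _ \<Rightarrow> ends e)"
      unfolding virt_terms_def by auto
    show "z \<in> U" using vcases[OF e(1)] e(2) endsS by fastforce
  qed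
  have T'U': "red_T T ends Es \<sigma> \<subseteq> U'"
    unfolding red_T_def U'_def cl_def using TU virtU by blast
  have finS': "finite S'" using finS unfolding S'_def by simp
  obtain S0 where S0: "{} \<subseteq> S0" "S0 \<subseteq> S'" "\<forall>x\<in>U'. \<forall>y\<in>U'. (x, y) \<in> (adj (red_ends ends Es \<sigma>) S0)\<^sup>*"
    "\<not> has_cycle (red_ends ends Es \<sigma>) S0"
    using spanning_aux[OF finS' _ no_cycle_empty conn'] by blast
  have st: "steiner_tree (red_V V ends Es \<sigma>) (red_E V E ends Es \<sigma>) (red_ends ends Es \<sigma>) (red_T T ends Es \<sigma>) U' S0"
    unfolding steiner_tree_def is_tree_def
    using S0 finU Une U'V S'E T'U' ends'S' finS' unfolding U'_def
    by (auto intro: finite_subset)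
  have "st_opt (red_V V ends Es \<sigma>) (red_E V E ends Es \<sigma>) (red_ends ends Es \<sigma>) w (red_T T ends Es \<sigma>)
     \<le> ereal (\<Sum>e\<in>S0. w e)"
    unfolding st_opt_def by (rule INF_lower2[of "(U', S0)"]) (use st in auto)
  also have "(\<Sum>e\<in>S0. w e) \<le> (\<Sum>e\<in>S \<inter> E. w e)"
    by (rule sum_mono2) (use finS S0 wpos in \<open>auto simp: S'_def\<close>)
  finally have opt: "st_opt (red_V V ends Es \<sigma>) (red_E V E ends Es \<sigma>) (red_ends ends Es \<sigma>) w (red_T T ends Es \<sigma>)
     \<le> ereal (\<Sum>e\<in>S \<inter> E. w e)" by simp
  have cost: "vest_cost E Es ends w wv U S = (\<Sum>e\<in>S \<inter> E. w e) + (\<Sum>e\<in>Es. wv e (\<sigma> e))"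
    unfolding vest_cost_def using \<sigma>_eq by simp
  have "st_opt (red_V V ends Es \<sigma>) (red_E V E ends Es \<sigma>) (red_ends ends Es \<sigma>) w (red_T T ends Es \<sigma>)
       + ereal (\<Sum>e\<in>Es. wv e (\<sigma> e)) \<le> ereal (\<Sum>e\<in>S \<inter> E. w e) + ereal (\<Sum>e\<in>Es. wv e (\<sigma> e))"
    using opt by (rule add_right_mono)
  also have "\<dots> = ereal (vest_cost E Es ends w wv U S)" using cost by simp
  finally show ?thesis using \<sigma>_in by blast
qed

lemma bwd:
  assumes mg: "multigraph V (E \<union> Es) ends"
    and disj: "E \<inter> Es = {}"
    and wpos: "\<forall>e\<in>E. w e \<ge> 0"
    and \<sigma>_in: "\<sigma> \<in> assignments ends Es"
    and st: "steiner_tree (red_V V ends Es \<sigma>) (red_E V E ends Es \<sigma>) (red_ends ends Es \<sigma>) (red_T T ends Es \<sigma>) U' S'"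
  shows "\<exists>U S. vest_solution V E Es ends T U S \<and>
     vest_cost E Es ends w wv U S \<le> (\<Sum>e\<in>S'. w e) + (\<Sum>e\<in>Es. wv e (\<sigma> e))"
proof -
  from st have tree: "is_tree (red_ends ends Es \<sigma>) U' S'" and U'V: "U' \<subseteq> red_V V ends Es \<sigma>"
    and S'E: "S' \<subseteq> red_E V E ends Es \<sigma>" and T'U': "red_T T ends Es \<sigma> \<subseteq> U'"
    unfolding steiner_tree_def by auto
  from tree have finU': "finite U'" and U'ne: "U' \<noteq> {}" and finS': "finite S'"
    and ends'S': "\<forall>e\<in>S'. red_ends ends Es \<sigma> e \<subseteq> U'"
    and conn': "\<forall>x\<in>U'. \<forall>y\<in>U'. (x, y) \<in> (adj (red_ends ends Es \<sigma>) S')\<^sup>*"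
    unfolding is_tree_def by auto
  from mg have finV: "finite V" and finEs: "finite Es" and card2: "\<And>e. e \<in> E \<union> Es \<Longrightarrow> card (ends e) = 2"
    and endsV: "\<And>e. e \<in> E \<union> Es \<Longrightarrow> ends e \<subseteq> V"
    unfolding multigraph_def by auto
  define C where "C = con_edges Es \<sigma>"
  define cl where "cl = cls ends Es \<sigma>"
  have CEs: "C \<subseteq> Es" unfolding C_def con_edges_def by auto
  have S'sub: "S' \<subseteq> E" using S'E unfolding red_E_def by auto
  have nocyc: "\<not> has_cycle ends C"
    using U'V U'ne unfolding red_V_def C_def by (auto split: if_splits)
  have U'cls: "\<exists>x\<in>V. A = cl x \<and> cl x \<inter> deleted ends Es \<sigma> = {}" if "A \<in> U'" for A
    using that U'V nocyc unfolding red_V_def C_def cl_def by auto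
  define U where "U = \<Union>U'"
  have clV: "cl x \<subseteq> V" if "x \<in> V" for x
  proof
    fix y assume "y \<in> cl x"
    then have "y = x \<or> (\<exists>e\<in>C. y \<in> ends e)" unfolding cl_def C_def by (rule cls_sub)
    then show "y \<in> V" using that CEs endsV by blast
  qed
  have clx: "x \<in> cl x" for x unfolding cl_def by (rule cls_refl)
  have UV: "U \<subseteq> V"
  proof
    fix y assume "y \<in> U"
    then obtain A where A: "A \<in> U'" "y \<in> A" unfolding U_def by blast
    obtain x where "x \<in> V" "A = cl x" using U'cls[OF A(1)] by blast
    then show "y \<in> V" using clV A(2) by blast
  qed
  have finU: "finite U" using UV finV by (rule finite_subset)
  have inU: "z \<in> U" if "cl z \<in> U'" for z
    unfolding U_def using that clx by (rule UnionI)
  have Une: "U \<noteq> {}"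
  proof -
    obtain A where A: "A \<in> U'" using U'ne by blast
    obtain x where "A = cl x" using U'cls[OF A] by blast
    then show ?thesis using inU A by blast
  qed
  have TV: "T \<union> virt_terms ends Es \<sigma> \<subseteq> U"
  proof
    fix z assume "z \<in> T \<union> virt_terms ends Es \<sigma>"
    then have "cl z \<in> red_T T ends Es \<sigma>" unfolding red_T_def cl_def by blast
    then show "z \<in> U" using T'U' inU by blast
  qed
  then have virtU: "virt_terms ends Es \<sigma> \<subseteq> U" and TU: "T \<subseteq> U" by auto
  have delU: "deleted ends Es \<sigma> \<inter> U = {}"
  proof (rule ccontr)
    assume "deleted ends Es \<sigma> \<inter> U \<noteq> {}"
    then obtain y where y: "y \<in> deleted ends Es \<sigma>" "y \<in> U" by blast
    then obtain A where A: "A \<in> U'" "y \<in> A" unfolding U_def by blast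
    obtain x where "A = cl x" "cl x \<inter> deleted ends Es \<sigma> = {}" using U'cls[OF A(1)] by blast
    then show False using A(2) y(1) by blast
  qed
  define SL where "SL = S' \<union> C"
  have endsSL: "\<forall>e\<in>SL. ends e \<subseteq> U"
  proof
    fix e assume e: "e \<in> SL"
    show "ends e \<subseteq> U"
    proof (cases "e \<in> S'")
      case True
      then show ?thesis using ends'S' inU unfolding red_ends_def cl_def by blast
    next
      case False
      then have "e \<in> Es" "\<sigma> e = Con" using e unfolding SL_def C_def con_edges_def by auto
      then have "ends e \<subseteq> virt_terms ends Es \<sigma>" unfolding virt_terms_def by force
      then show ?thesis using virtU by blast
    qed
  qed
  have within: "(a, b) \<in> (adj ends SL)\<^sup>*" if "a \<in> cl z" "b \<in> cl z" for a b z
  proof -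
    have "(z, a) \<in> (adj ends C)\<^sup>*" "(z, b) \<in> (adj ends C)\<^sup>*"
      using that unfolding cl_def C_def cls_mem by auto
    then have "(z, a) \<in> (adj ends SL)\<^sup>*" "(z, b) \<in> (adj ends SL)\<^sup>*"
      using adj_rtr_mono[of C SL] unfolding SL_def by auto
    then show ?thesis by (meson adj_rtr_sym rtrancl_trans)
  qed
  have connL: "\<forall>u\<in>U. \<forall>v\<in>U. (u, v) \<in> (adj ends SL)\<^sup>*"
  proof (intro ballI)
    fix u v assume "u \<in> U" "v \<in> U"
    then obtain A B where AB: "A \<in> U'" "B \<in> U'" "u \<in> A" "v \<in> B" unfolding U_def by blast
    obtain x where x: "A = cl x" using U'cls[OF AB(1)] by blast
    have "(A, B) \<in> (adj (red_ends ends Es \<sigma>) S')\<^sup>*" using conn' AB by blast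
    then have "\<forall>b\<in>B. (u, b) \<in> (adj ends SL)\<^sup>*"
    proof (induction rule: rtrancl_induct)
      case base then show ?case using within AB(3) x by blast
    next
      case (step B B')
      then obtain e where e: "e \<in> S'" "red_ends ends Es \<sigma> e = {B, B'}" unfolding adj_def by auto
      have "card (ends e) = 2" using card2 e S'sub by auto
      then obtain p q where pq: "ends e = {p, q}" "p \<noteq> q" by (rule card2_obtain)
      have "{cl p, cl q} = {B, B'}" using e pq unfolding red_ends_def cl_def by auto
      then have cases: "(cl p = B \<and> cl q = B') \<or> (cl q = B \<and> cl p = B')"
        by (auto simp: doubleton_eq_iff)
      have pqadj: "(p, q) \<in> adj ends SL" "(q, p) \<in> adj ends SL"
        using e pq unfolding adj_def SL_def by (auto simp: insert_commute)
      show ?case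
      proof
        fix b' assume b': "b' \<in> B'"
        from cases show "(u, b') \<in> (adj ends SL)\<^sup>*"
        proof
          assume h: "cl p = B \<and> cl q = B'"
          have "(u, p) \<in> (adj ends SL)\<^sup>*" using step.IH h cls_refl unfolding cl_def by metis
          moreover have "(q, b') \<in> (adj ends SL)\<^sup>*" using within[of q q b'] h b' cls_refl unfolding cl_def by metis
          ultimately show ?thesis using pqadj by (meson rtrancl_into_rtrancl rtrancl_trans)
        next
          assume h: "cl q = B \<and> cl p = B'"
          have "(u, q) \<in> (adj ends SL)\<^sup>*" using step.IH h cls_refl unfolding cl_def by metis
          moreover have "(p, b') \<in> (adj ends SL)\<^sup>*" using within[of p p b'] h b' cls_refl unfolding cl_def by metis
          ultimately show ?thesis using pqadj by (meson rtrancl_into_rtrancl rtrancl_trans)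
        qed
      qed
    qed
    then show "(u, v) \<in> (adj ends SL)\<^sup>*" using AB(4) by blast
  qed
  have finSL: "finite SL" unfolding SL_def using finS' CEs finEs by (auto intro: finite_subset)
  obtain S0 where S0: "C \<subseteq> S0" "S0 \<subseteq> SL" "\<forall>x\<in>U. \<forall>y\<in>U. (x, y) \<in> (adj ends S0)\<^sup>*"
    "\<not> has_cycle ends S0"
    using spanning_aux[OF finSL _ nocyc connL] unfolding SL_def by blast
  have S0Es: "S0 \<inter> Es = C" using S0(1,2) S'sub disj CEs unfolding SL_def by blast
  have tree0: "is_tree ends U S0"
    unfolding is_tree_def using finU Une S0 endsSL finSL by (auto intro: finite_subset)
  have meet: "\<forall>e\<in>Es. ends e \<inter> U \<noteq> {}"
  proof
    fix e assume e: "e \<in> Es"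
    have "card (ends e) = 2" using card2 e by auto
    then obtain p q where pq: "ends e = {p, q}" "p \<noteq> q" by (rule card2_obtain)
    have "\<sigma> e \<in> Side ` ends e \<union> {Dis, Con}" using \<sigma>_in e unfolding assignments_def by auto
    then show "ends e \<inter> U \<noteq> {}"
    proof (elim UnE)
      assume "\<sigma> e \<in> Side ` ends e"
      then obtain x where x: "x \<in> ends e" "\<sigma> e = Side x" by auto
      then have "x \<in> virt_terms ends Es \<sigma>" using e unfolding virt_terms_def by force
      then show ?thesis using x virtU by blast
    next
      assume "\<sigma> e \<in> {Dis, Con}"
      then have "ends e \<subseteq> virt_terms ends Es \<sigma>" using e unfolding virt_terms_def by force
      then show ?thesis using virtU pq by blast
    qed
  qed
  have sol: "vest_solution V E Es ends T U S0"
    unfolding vest_solution_def using tree0 UV S0(2) S'sub CEs TU meet unfolding SL_def by blast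
  have vs: "vstate_of ends U S0 e = \<sigma> e" if e: "e \<in> Es" for e
  proof -
    have inS0: "\<sigma> e = Con" if "e \<in> S0"
    proof -
      have "e \<in> S0 \<inter> Es" using that e by blast
      then have "e \<in> C" using S0Es by simp
      then show ?thesis unfolding C_def con_edges_def by simp
    qed
    have "\<sigma> e \<in> Side ` ends e \<union> {Dis, Con}" using \<sigma>_in e unfolding assignments_def by auto
    then consider (Sd) x where "x \<in> ends e" "\<sigma> e = Side x" | (D) "\<sigma> e = Dis" | (Cn) "\<sigma> e = Con" by auto
    then show ?thesis
    proof cases
      case Cn
      then have "e \<in> S0" using S0Es e unfolding C_def con_edges_def by auto
      then show ?thesis using Cn unfolding vstate_of_def by simp
    next
      case D
      then have "e \<notin> S0" using inS0 by auto
      moreover have "ends e \<subseteq> virt_terms ends Es \<sigma>" using e D unfolding virt_terms_def by force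
      ultimately show ?thesis using D virtU unfolding vstate_of_def by auto
    next
      case Sd
      then have nS: "e \<notin> S0" using inS0 by auto
      have "card (ends e) = 2" using card2 e by auto
      then obtain p q where pq: "ends e = {p, q}" "p \<noteq> q" by (rule card2_obtain)
      then obtain y where y: "ends e = {x, y}" "y \<noteq> x" using Sd(1) by (metis insert_commute insertE singletonD)
      have "y \<in> deleted ends Es \<sigma>" using e Sd y unfolding deleted_def by auto
      then have yU: "y \<notin> U" using delU by auto
      have "x \<in> virt_terms ends Es \<sigma>" using e Sd unfolding virt_terms_def by force
      then have xU: "x \<in> U" using virtU by auto
      have "ends e \<inter> U = {x}" using y xU yU by auto
      then show ?thesis using nS y yU Sd(2) unfolding vstate_of_def by auto
    qed
  qed
  have "(\<Sum>e\<in>S0 \<inter> E. w e) \<le> (\<Sum>e\<in>S'. w e)"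
    by (rule sum_mono2) (use finS' S0(2) CEs disj wpos S'sub in \<open>auto simp: SL_def\<close>)
  then have "vest_cost E Es ends w wv U S0 \<le> (\<Sum>e\<in>S'. w e) + (\<Sum>e\<in>Es. wv e (\<sigma> e))"
    unfolding vest_cost_def using vs by simp
  then show ?thesis using sol by blast
qed

theorem mainTheorem3:
  fixes V :: "'v set" and E Es :: "'e set" and ends :: "'e \<Rightarrow> 'v set"
    and w :: "'e \<Rightarrow> real" and wv :: "'e \<Rightarrow> 'v vstate \<Rightarrow> real" and T :: "'v set"
  assumes "multigraph V (E \<union> Es) ends"
    and "E \<inter> Es = {}"
    and "T \<subseteq> V"
    and "\<forall>e\<in>E. w e \<ge> 0"
    and "\<forall>e\<in>Es. \<forall>s \<in> Side ` ends e \<union> {Dis, Con}. wv e s \<ge> 0"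
  shows "card (assignments ends Es) = 4 ^ card Es \<and>
    (\<forall>\<sigma>\<in>assignments ends Es.
       multigraph (red_V V ends Es \<sigma>) (red_E V E ends Es \<sigma>) (red_ends ends Es \<sigma>) \<and>
       card (red_T T ends Es \<sigma>) \<le> card T + 2 * card Es) \<and>
    vest_opt V E Es ends w wv T =
      (INF \<sigma>\<in>assignments ends Es.
         st_opt (red_V V ends Es \<sigma>) (red_E V E ends Es \<sigma>) (red_ends ends Es \<sigma>) w
                (red_T T ends Es \<sigma>)
         + ereal (\<Sum>e\<in>Es. wv e (\<sigma> e)))"
proof -
  note mg = assms(1)
  from mg have finV: "finite V" and finE: "finite E" and finEs: "finite Es"
    and card2: "\<And>e. e \<in> E \<union> Es \<Longrightarrow> card (ends e) = 2"
    unfolding multigraph_def by auto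
  have fin_ends: "finite (ends e)" if "e \<in> E \<union> Es" for e
    using card2[OF that] by (metis card.infinite zero_neq_numeral)
  have P1: "card (assignments ends Es) = 4 ^ card Es"
  proof -
    have c4: "card (Side ` ends e \<union> {Dis, Con}) = 4" if e: "e \<in> Es" for e
    proof -
      have "card (Side ` ends e) = 2" using card2 e by (simp add: card_image inj_on_def)
      moreover have "finite (Side ` ends e)" using fin_ends e by simp
      ultimately show ?thesis by (simp add: card_insert_if image_iff)
    qed
    have "card (assignments ends Es) = (\<Prod>e\<in>Es. card (Side ` ends e \<union> {Dis, Con}))"
      unfolding assignments_def using finEs by (rule card_PiE)
    also have "\<dots> = (\<Prod>e\<in>Es. 4)" using c4 by simp
    finally show ?thesis by simp
  qed
  have P2: "multigraph (red_V V ends Es \<sigma>) (red_E V E ends Es \<sigma>) (red_ends ends Es \<sigma>) \<and>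
       card (red_T T ends Es \<sigma>) \<le> card T + 2 * card Es" if \<sigma>: "\<sigma> \<in> assignments ends Es" for \<sigma>
  proof
    have "red_V V ends Es \<sigma> \<subseteq> cls ends Es \<sigma> ` V" unfolding red_V_def by auto
    then have "finite (red_V V ends Es \<sigma>)" using finV finite_subset by blast
    moreover have "finite (red_E V E ends Es \<sigma>)" using finE unfolding red_E_def by simp
    ultimately show "multigraph (red_V V ends Es \<sigma>) (red_E V E ends Es \<sigma>) (red_ends ends Es \<sigma>)"
      unfolding multigraph_def red_E_def by auto
  next
    let ?f = "\<lambda>e. case \<sigma> e of Side x \<Rightarrow> {x} | _ \<Rightarrow> ends e"
    have fc: "finite (?f e) \<and> card (?f e) \<le> 2" if e: "e \<in> Es" for e
      using card2[of e] fin_ends[of e] e by (cases "\<sigma> e") auto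
    have finvt: "finite (virt_terms ends Es \<sigma>)" unfolding virt_terms_def using finEs fc by blast
    have "card (virt_terms ends Es \<sigma>) \<le> (\<Sum>e\<in>Es. card (?f e))"
      unfolding virt_terms_def by (rule card_UN_le[OF finEs])
    also have "\<dots> \<le> (\<Sum>e\<in>Es. 2)" by (rule sum_mono) (use fc in auto)
    finally have cv: "card (virt_terms ends Es \<sigma>) \<le> 2 * card Es" by simp
    have finT: "finite T" using assms(3) finV finite_subset by blast
    have "card (red_T T ends Es \<sigma>) \<le> card (T \<union> virt_terms ends Es \<sigma>)"
      unfolding red_T_def by (rule card_image_le) (use finT finvt in simp)
    also have "\<dots> \<le> card T + card (virt_terms ends Es \<sigma>)" by (rule card_Un_le)
    finally show "card (red_T T ends Es \<sigma>) \<le> card T + 2 * card Es" using cv by simp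
  qed
  have le1: "vest_opt V E Es ends w wv T \<le>
      st_opt (red_V V ends Es \<sigma>) (red_E V E ends Es \<sigma>) (red_ends ends Es \<sigma>) w (red_T T ends Es \<sigma>)
         + ereal (\<Sum>e\<in>Es. wv e (\<sigma> e))" if \<sigma>: "\<sigma> \<in> assignments ends Es" for \<sigma>
    unfolding st_opt_def
  proof (rule ereal_INF_add_bound)
    fix US assume US: "US \<in> {(U, S). steiner_tree (red_V V ends Es \<sigma>) (red_E V E ends Es \<sigma>) (red_ends ends Es \<sigma>) (red_T T ends Es \<sigma>) U S}"
    then have st: "steiner_tree (red_V V ends Es \<sigma>) (red_E V E ends Es \<sigma>) (red_ends ends Es \<sigma>) (red_T T ends Es \<sigma>) (fst US) (snd US)"
      by auto
    obtain U S where sol: "vest_solution V E Es ends T U S"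
      and c: "vest_cost E Es ends w wv U S \<le> (\<Sum>e\<in>snd US. w e) + (\<Sum>e\<in>Es. wv e (\<sigma> e))"
      using bwd[OF mg assms(2) assms(4) \<sigma> st] by blast
    have "vest_opt V E Es ends w wv T \<le> ereal (vest_cost E Es ends w wv U S)"
      unfolding vest_opt_def by (rule INF_lower2[of "(U, S)"]) (use sol in auto)
    also have "\<dots> \<le> ereal ((\<Sum>e\<in>snd US. w e) + (\<Sum>e\<in>Es. wv e (\<sigma> e)))" using c by simp
    finally show "vest_opt V E Es ends w wv T \<le> ereal ((\<Sum>e\<in>snd US. w e) + (\<Sum>e\<in>Es. wv e (\<sigma> e)))" .
    have "snd US \<subseteq> E" using st unfolding steiner_tree_def red_E_def by auto
    then show "0 \<le> (\<Sum>e\<in>snd US. w e)" using assms(4) by (intro sum_nonneg) auto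
  qed
  have le2: "(INF \<sigma>\<in>assignments ends Es.
         st_opt (red_V V ends Es \<sigma>) (red_E V E ends Es \<sigma>) (red_ends ends Es \<sigma>) w
                (red_T T ends Es \<sigma>)
         + ereal (\<Sum>e\<in>Es. wv e (\<sigma> e))) \<le> vest_opt V E Es ends w wv T"
    unfolding vest_opt_def
  proof (rule INF_greatest)
    fix US assume "US \<in> {(U, S). vest_solution V E Es ends T U S}"
    then have sol: "vest_solution V E Es ends T (fst US) (snd US)" by auto
    obtain \<sigma> where \<sigma>: "\<sigma> \<in> assignments ends Es" and
      c: "st_opt (red_V V ends Es \<sigma>) (red_E V E ends Es \<sigma>) (red_ends ends Es \<sigma>) w (red_T T ends Es \<sigma>)
       + ereal (\<Sum>e\<in>Es. wv e (\<sigma> e)) \<le> ereal (vest_cost E Es ends w wv (fst US) (snd US))"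
      using fwd[OF mg assms(2) assms(4) sol, of wv] by blast
    show "(INF \<sigma>\<in>assignments ends Es.
         st_opt (red_V V ends Es \<sigma>) (red_E V E ends Es \<sigma>) (red_ends ends Es \<sigma>) w
                (red_T T ends Es \<sigma>)
         + ereal (\<Sum>e\<in>Es. wv e (\<sigma> e))) \<le> ereal (vest_cost E Es ends w wv (fst US) (snd US))"
      apply (rule order_trans[OF _ c])
      apply (rule INF_lower)
      apply (rule \<sigma>)
      done
  qed
  have P3: "vest_opt V E Es ends w wv T =
      (INF \<sigma>\<in>assignments ends Es.
         st_opt (red_V V ends Es \<sigma>) (red_E V E ends Es \<sigma>) (red_ends ends Es \<sigma>) w
                (red_T T ends Es \<sigma>)
         + ereal (\<Sum>e\<in>Es. wv e (\<sigma> e)))"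
    by (rule antisym[OF INF_greatest[OF le1] le2])
  show ?thesis using P1 P2 P3 by blast
qed

end
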